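(* Let $I$ and $J$ be $yx$-tight ideals in $K[x,y]$. Then $IJ$ is also a $yx$-tight ideal.
   Context: Let $J\subset K[x,y]$ be a $(x,y)$-primary monomial ideal with minimal monomial generating set $G(J)=\{x^{\alpha_i}y^{\beta_i}: i=0,\ldots,m\}$ ordered so that $\alpha_0>\cdots>\alpha_m=0$ and $0=\beta_0<\cdots<\beta_m$. $J$ is $x$-tight if $\alpha_{m-i}=i$ for all $i=0,\ldots,m$; $y$-tight if $\beta_i=i$ for all $i=0,\ldots,m$; $yx$-tight if there exists $0\le j\le m$ with $\beta_i=i$ for all $i=0,\ldots,j$ and $\alpha_{m-i}=i$ for all $i=0,\ldots,m-j$ (so $x$-tight and $y$-tight ideals are $yx$-tight). *)

theory Defs
  imports Main
begin

text \<open>A monomial ideal of K[x,y] is determined by the set of exponent pairs (a,b) of the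
monomials x^a y^b it contains; this set is closed under multiplication by monomials
(upward closed in the componentwise order).\<close>

definition monomial_ideal :: "(nat \<times> nat) set \<Rightarrow> bool" where
  "monomial_ideal M \<longleftrightarrow>
     (\<forall>a b c d. (a, b) \<in> M \<longrightarrow> a \<le> c \<longrightarrow> b \<le> d \<longrightarrow> (c, d) \<in> M)"

definition xy_primary :: "(nat \<times> nat) set \<Rightarrow> bool" where
  "xy_primary M \<longleftrightarrow> monomial_ideal M \<and> (0, 0) \<notin> M \<and>
     (\<exists>a. (a, 0) \<in> M) \<and> (\<exists>b. (0, b) \<in> M)"

definition min_gens :: "(nat \<times> nat) set \<Rightarrow> (nat \<times> nat) set" where
  "min_gens M = {(a, b) \<in> M. \<forall>c d. (c, d) \<in> M \<longrightarrow> c \<le> a \<longrightarrow> d \<le> b \<longrightarrow> (c, d) = (a, b)}"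

definition ideal_prod :: "(nat \<times> nat) set \<Rightarrow> (nat \<times> nat) set \<Rightarrow> (nat \<times> nat) set" where
  "ideal_prod I J = {(a, b). \<exists>a1 b1 a2 b2. (a1, b1) \<in> I \<and> (a2, b2) \<in> J \<and>
                                  a1 + a2 \<le> a \<and> b1 + b2 \<le> b}"

definition yx_tight :: "(nat \<times> nat) set \<Rightarrow> bool" where
  "yx_tight J \<longleftrightarrow> xy_primary J \<and>
     (\<exists>(m::nat) (\<alpha>::nat \<Rightarrow> nat) (\<beta>::nat \<Rightarrow> nat).
        min_gens J = {(\<alpha> i, \<beta> i) | i. i \<le> m} \<and>
        (\<forall>i j. i < j \<longrightarrow> j \<le> m \<longrightarrow> \<alpha> j < \<alpha> i \<and> \<beta> i < \<beta> j) \<and>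
        \<alpha> m = 0 \<and> \<beta> 0 = 0 \<and>
        (\<exists>j \<le> m. (\<forall>i \<le> j. \<beta> i = i) \<and> (\<forall>i \<le> m - j. \<alpha> (m - i) = i)))"

end

theory Submission
  imports Defs
begin

definition SY :: "(nat \<times> nat) set \<Rightarrow> nat \<Rightarrow> bool" where
  "SY M q \<longleftrightarrow> (\<forall>a b. b < q \<longrightarrow> (a, b) \<in> M \<longrightarrow> (\<exists>a'. a = Suc a' \<and> (a', Suc b) \<in> M))"

definition SX :: "(nat \<times> nat) set \<Rightarrow> nat \<Rightarrow> bool" where
  "SX M p \<longleftrightarrow> (\<forall>a b. a < p \<longrightarrow> (a, b) \<in> M \<longrightarrow> (\<exists>b'. b = Suc b' \<and> (Suc a, b') \<in> M))"

definition tight :: "(nat \<times> nat) set \<Rightarrow> nat \<Rightarrow> nat \<Rightarrow> bool" where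
  "tight M p q \<longleftrightarrow> xy_primary M \<and> (p, q) \<in> min_gens M \<and> SY M q \<and> SX M p"

lemma mg_iff: "(a, b) \<in> min_gens M \<longleftrightarrow> (a, b) \<in> M \<and>
   (\<forall>c d. (c, d) \<in> M \<longrightarrow> c \<le> a \<longrightarrow> d \<le> b \<longrightarrow> c = a \<and> d = b)"
  by (auto simp: min_gens_def)

lemma mg_sub: "x \<in> min_gens M \<Longrightarrow> x \<in> M"
  by (auto simp: min_gens_def)

lemma min_below: "(a, b) \<in> M \<Longrightarrow> \<exists>c d. (c, d) \<in> min_gens M \<and> c \<le> a \<and> d \<le> b"
proof (induction "a + b" arbitrary: a b rule: less_induct)
  case less
  show ?case
  proof (cases "(a, b) \<in> min_gens M")
    case True thus ?thesis by blast
  next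
    case False
    then obtain c d where cd: "(c, d) \<in> M" "c \<le> a" "d \<le> b" "(c, d) \<noteq> (a, b)"
      using less.prems unfolding min_gens_def by auto
    then have "c + d < a + b" by auto
    from less.hyps[OF this cd(1)] obtain e f where "(e, f) \<in> min_gens M" "e \<le> c" "f \<le> d"
      by blast
    thus ?thesis using cd(2,3) le_trans by blast
  qed
qed

lemma mono_close: "monomial_ideal M \<Longrightarrow> (a, b) \<in> M \<Longrightarrow> a \<le> c \<Longrightarrow> b \<le> d \<Longrightarrow> (c, d) \<in> M"
  unfolding monomial_ideal_def by blast

lemma mgD: "(c, d) \<in> min_gens M \<Longrightarrow> (x, y) \<in> M \<Longrightarrow> x \<le> c \<Longrightarrow> y \<le> d \<Longrightarrow> x = c \<and> y = d"
  unfolding mg_iff by blast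

lemma antichain:
  assumes "(a, b) \<in> min_gens M" "(c, d) \<in> min_gens M" "b < d"
  shows "c < a"
proof (rule ccontr)
  assume "\<not> c < a"
  then have "a \<le> c" by simp
  have "(a, b) \<in> M" using assms(1) by (rule mg_sub)
  from mgD[OF assms(2) this \<open>a \<le> c\<close>] assms(3) show False by simp
qed

lemma uniq:
  assumes "(a, b) \<in> min_gens M" "(c, b) \<in> min_gens M"
  shows "a = c"
proof (cases "a \<le> c")
  case True
  from mgD[OF assms(2) mg_sub[OF assms(1)] True] show ?thesis by simp
next
  case False
  then have "c \<le> a" by simp
  from mgD[OF assms(1) mg_sub[OF assms(2)] this] show ?thesis by simp
qed

lemma counting:
  fixes f :: "nat \<Rightarrow> nat"
  assumes sm: "\<And>i j. i < j \<Longrightarrow> j \<le> n \<Longrightarrow> f i < f j"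
    and kn: "k \<le> n" and fk: "f k = q" and cov: "{0..q} \<subseteq> f ` {0..n}"
  shows "\<forall>i \<le> k. f i = i"
proof -
  have ge: "i \<le> f i" if "i \<le> n" for i
    using that
  proof (induction i)
    case 0 then show ?case by simp
  next
    case (Suc i)
    have "f i < f (Suc i)" by (rule sm) (use Suc.prems in auto)
    moreover have "i \<le> f i" using Suc.IH Suc.prems by linarith
    ultimately show ?case by linarith
  qed
  have gap: "f i + t \<le> f (i + t)" if "i + t \<le> n" for i t
    using that
  proof (induction t)
    case 0 then show ?case by simp
  next
    case (Suc t)
    have "f (i + t) < f (i + Suc t)" by (rule sm) (use Suc.prems in auto)
    moreover have "f i + t \<le> f (i + t)" using Suc.IH Suc.prems by linarith
    ultimately show ?case by linarith
  qed
  have "{0..q} \<subseteq> f ` {0..k}"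
  proof
    fix x assume x: "x \<in> {0..q}"
    with cov obtain t where t: "t \<le> n" "x = f t" by auto
    have "t \<le> k"
    proof (rule ccontr)
      assume "\<not> t \<le> k"
      then have "k < t" by simp
      have "f k < f t" by (rule sm) (use t \<open>k < t\<close> in auto)
      moreover have "x \<le> q" using x by simp
      ultimately show False using t fk by linarith
    qed
    with t show "x \<in> f ` {0..k}" by auto
  qed
  then have "card {0..q} \<le> card (f ` {0..k})" by (intro card_mono) auto
  also have "\<dots> \<le> card {0..k}" by (rule card_image_le) simp
  finally have "q \<le> k" by simp
  show ?thesis
  proof (intro allI impI)
    fix i assume "i \<le> k"
    have "f i + (k - i) \<le> f (i + (k - i))" by (rule gap) (use \<open>i \<le> k\<close> kn in auto)
    then have "f i + (k - i) \<le> f k" using \<open>i \<le> k\<close> by simp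
    moreover have "i \<le> f i" by (rule ge) (use \<open>i \<le> k\<close> kn in auto)
    ultimately show "f i = i" using fk \<open>q \<le> k\<close> \<open>i \<le> k\<close> by linarith
  qed
qed

lemma enum:
  assumes "xy_primary M"
  shows "\<exists>(m::nat) (\<alpha>::nat\<Rightarrow>nat) (\<beta>::nat\<Rightarrow>nat). min_gens M = {(\<alpha> i, \<beta> i) | i. i \<le> m} \<and>
          (\<forall>i j. i < j \<longrightarrow> j \<le> m \<longrightarrow> \<alpha> j < \<alpha> i \<and> \<beta> i < \<beta> j) \<and>
          \<alpha> m = 0 \<and> \<beta> 0 = 0"
proof -
  from assms obtain A B where A: "(A, 0) \<in> M" and B: "(0, B) \<in> M"
    unfolding xy_primary_def by blast
  have sub: "min_gens M \<subseteq> {0..A} \<times> {0..B}"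
  proof
    fix x assume "x \<in> min_gens M"
    then obtain a b where x: "x = (a, b)" "(a, b) \<in> min_gens M"
      by (cases x) auto
    have "b \<le> B"
    proof (rule ccontr)
      assume nb: "\<not> b \<le> B"
      then have "B \<le> b" by simp
      from mgD[OF x(2) B _ this] nb show False by simp
    qed
    moreover have "a \<le> A"
    proof (rule ccontr)
      assume na: "\<not> a \<le> A"
      then have "A \<le> a" by simp
      from mgD[OF x(2) A this] na show False by simp
    qed
    ultimately show "x \<in> {0..A} \<times> {0..B}" using x by simp
  qed
  have finG: "finite (min_gens M)"
    by (rule finite_subset[OF sub]) simp
  define Y where "Y = snd ` min_gens M"
  have finY: "finite Y" unfolding Y_def using finG by (rule finite_imageI)
  define xs where "xs = sorted_list_of_set Y"
  have setxs: "set xs = Y" unfolding xs_def using finY by (rule set_sorted_list_of_set)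
  have sxs: "sorted_wrt (<) xs" unfolding xs_def by (rule strict_sorted_list_of_set)
  from min_below[OF A] obtain c0 where c0: "(c0, 0) \<in> min_gens M" by auto
  from min_below[OF B] obtain b0 where b0: "(0, b0) \<in> min_gens M" by auto
  have "0 \<in> Y" unfolding Y_def by (rule image_eqI[of _ _ "(c0, 0)"]) (use c0 in simp_all)
  then have "xs \<noteq> []" using setxs by auto
  define m where "m = length xs - 1"
  have mlen: "i \<le> m \<longleftrightarrow> i < length xs" for i using \<open>xs \<noteq> []\<close> unfolding m_def by (cases xs) auto
  define \<beta> where "\<beta> i = xs ! i" for i
  define \<alpha> where "\<alpha> i = (THE a. (a, \<beta> i) \<in> min_gens M)" for i
  have \<alpha>G: "(\<alpha> i, \<beta> i) \<in> min_gens M" if "i \<le> m" for i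
  proof -
    have "\<beta> i \<in> set xs" unfolding \<beta>_def using that mlen by simp
    then have "\<beta> i \<in> Y" using setxs by simp
    then obtain a where a: "(a, \<beta> i) \<in> min_gens M" unfolding Y_def by force
    have "\<alpha> i = a" unfolding \<alpha>_def
    proof (rule the_equality)
      show "(a, \<beta> i) \<in> min_gens M" by (rule a)
      show "a' = a" if "(a', \<beta> i) \<in> min_gens M" for a' using uniq[OF that a] .
    qed
    with a show ?thesis by simp
  qed
  have \<beta>s: "\<beta> i < \<beta> j" if "i < j" "j \<le> m" for i j
    unfolding \<beta>_def by (rule sorted_wrt_nth_less[OF sxs]) (use that mlen in auto)
  have \<alpha>s: "\<alpha> j < \<alpha> i" if "i < j" "j \<le> m" for i j
    by (rule antichain[OF \<alpha>G \<alpha>G \<beta>s[OF that]]) (use that in auto)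
  have eq: "min_gens M = {(\<alpha> i, \<beta> i) | i. i \<le> m}"
  proof
    show "min_gens M \<subseteq> {(\<alpha> i, \<beta> i) | i. i \<le> m}"
    proof
      fix x assume "x \<in> min_gens M"
      then obtain a b where x: "x = (a, b)" "(a, b) \<in> min_gens M" by (cases x) auto
      then have "b \<in> Y" unfolding Y_def by (metis image_eqI snd_conv)
      then have "b \<in> set xs" using setxs by simp
      then obtain i where i: "i < length xs" "xs ! i = b" by (auto simp: in_set_conv_nth)
      then have im: "i \<le> m" using mlen by simp
      have "\<beta> i = b" using i \<beta>_def by simp
      then have "(\<alpha> i, b) \<in> min_gens M" using \<alpha>G[OF im] by simp
      then have "\<alpha> i = a" using uniq x(2) by blast
      then show "x \<in> {(\<alpha> i, \<beta> i) | i. i \<le> m}" using im x \<open>\<beta> i = b\<close> by blast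
    qed
  next
    show "{(\<alpha> i, \<beta> i) | i. i \<le> m} \<subseteq> min_gens M" using \<alpha>G by blast
  qed
  have "\<beta> 0 = 0"
  proof -
    have "(c0, 0) \<in> {(\<alpha> i, \<beta> i) | i. i \<le> m}" using c0 eq by simp
    then obtain k where k: "k \<le> m" "\<beta> k = 0" by auto
    show ?thesis
    proof (cases "k = 0")
      case True with k show ?thesis by simp
    next
      case False
      have "\<beta> 0 < \<beta> k" by (rule \<beta>s) (use False k in auto)
      with k show ?thesis by simp
    qed
  qed
  moreover have "\<alpha> m = 0"
  proof -
    have "(0, b0) \<in> {(\<alpha> i, \<beta> i) | i. i \<le> m}" using b0 eq by simp
    then obtain k where k: "k \<le> m" "\<alpha> k = 0" by auto
    show ?thesis
    proof (cases "k = m")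
      case True with k show ?thesis by simp
    next
      case False
      have "\<alpha> m < \<alpha> k" by (rule \<alpha>s) (use False k in auto)
      with k show ?thesis by simp
    qed
  qed
  ultimately have z: "\<beta> 0 = 0" "\<alpha> m = 0" by auto
  have st: "\<forall>i j. i < j \<longrightarrow> j \<le> m \<longrightarrow> \<alpha> j < \<alpha> i \<and> \<beta> i < \<beta> j"
    using \<alpha>s \<beta>s by blast
  show ?thesis
    apply (rule exI[of _ m], rule exI[of _ \<alpha>], rule exI[of _ \<beta>])
    using eq st z by (intro conjI)
qed

lemma iterY:
  assumes "SY M q" "(a, b) \<in> M" "b + k \<le> q"
  shows "k \<le> a \<and> (a - k, b + k) \<in> M"
  using assms(3)
proof (induction k)
  case 0 then show ?case using assms(2) by simp
next
  case (Suc k)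
  then have "k \<le> a" "(a - k, b + k) \<in> M" "b + k < q" by auto
  with assms(1) obtain a' where "a - k = Suc a'" "(a', Suc (b + k)) \<in> M"
    unfolding SY_def by blast
  moreover have "Suc k \<le> a" "a - Suc k = a'" using \<open>a - k = Suc a'\<close> by linarith+
  ultimately show ?case by simp
qed

lemma iterX:
  assumes "SX M p" "(a, b) \<in> M" "a + k \<le> p"
  shows "k \<le> b \<and> (a + k, b - k) \<in> M"
  using assms(3)
proof (induction k)
  case 0 then show ?case using assms(2) by simp
next
  case (Suc k)
  then have "k \<le> b" "(a + k, b - k) \<in> M" "a + k < p" by auto
  with assms(1) obtain b' where "b - k = Suc b'" "(Suc (a + k), b') \<in> M"
    unfolding SX_def by blast
  moreover have "Suc k \<le> b" "b - Suc k = b'" using \<open>b - k = Suc b'\<close> by linarith+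
  ultimately show ?case by simp
qed

lemma sum_bound:
  assumes "tight M p q" "(a, b) \<in> M"
  shows "p + q \<le> a + b"
proof -
  have mg: "(p, q) \<in> min_gens M" and sy: "SY M q" and sx: "SX M p"
    using assms(1) unfolding tight_def by auto
  show ?thesis
  proof (cases "b < q")
    case True
    from iterY[OF sy assms(2), of "q - b"] True
    have h: "q - b \<le> a" "(a - (q - b), q) \<in> M" by auto
    have "p \<le> a - (q - b)"
    proof (rule ccontr)
      assume "\<not> p \<le> a - (q - b)"
      with h(2) mg show False unfolding mg_iff by fastforce
    qed
    then show ?thesis using h True by simp
  next
    case False
    show ?thesis
    proof (cases "a < p")
      case True
      from iterX[OF sx assms(2), of "p - a"] True
      have h: "p - a \<le> b" "(p, b - (p - a)) \<in> M" by auto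
      have "q \<le> b - (p - a)"
      proof (rule ccontr)
        assume "\<not> q \<le> b - (p - a)"
        with h(2) mg show False unfolding mg_iff by fastforce
      qed
      then show ?thesis using h True by simp
    next
      case False
      with \<open>\<not> b < q\<close> show ?thesis by simp
    qed
  qed
qed

lemma gen_y:
  assumes "tight M p q"
  shows "b \<le> q \<Longrightarrow> \<exists>c. (c, b) \<in> min_gens M"
proof (induction b)
  case 0
  from assms obtain A where "(A, 0) \<in> M" unfolding tight_def xy_primary_def by blast
  from min_below[OF this] show ?case by auto
next
  case (Suc b)
  then obtain c where c: "(c, b) \<in> min_gens M" by auto
  have sy: "SY M q" using assms unfolding tight_def by auto
  have "b < q" using Suc.prems by simp
  from sy[unfolded SY_def, rule_format, OF this mg_sub[OF c]] obtain c' where c': "c = Suc c'" "(c', Suc b) \<in> M"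
    by blast
  from min_below[OF c'(2)] obtain e f where ef: "(e, f) \<in> min_gens M" "e \<le> c'" "f \<le> Suc b"
    by blast
  have "f = Suc b"
  proof (rule ccontr)
    assume "f \<noteq> Suc b"
    then have "f \<le> b" using ef by simp
    with ef c c' show False unfolding mg_iff by fastforce
  qed
  with ef show ?case by auto
qed

lemma gen_x:
  assumes "tight M p q"
  shows "a \<le> p \<Longrightarrow> \<exists>d. (a, d) \<in> min_gens M"
proof (induction a)
  case 0
  from assms obtain B where "(0, B) \<in> M" unfolding tight_def xy_primary_def by blast
  from min_below[OF this] show ?case by auto
next
  case (Suc a)
  then obtain d where d: "(a, d) \<in> min_gens M" by auto
  have sx: "SX M p" using assms unfolding tight_def by auto
  have "a < p" using Suc.prems by simp
  from sx[unfolded SX_def, rule_format, OF this mg_sub[OF d]] obtain d' where d': "d = Suc d'" "(Suc a, d') \<in> M"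
    by blast
  from min_below[OF d'(2)] obtain e f where ef: "(e, f) \<in> min_gens M" "e \<le> Suc a" "f \<le> d'"
    by blast
  have "e = Suc a"
  proof (rule ccontr)
    assume "e \<noteq> Suc a"
    then have "e \<le> a" using ef by simp
    with ef d d' show False unfolding mg_iff by fastforce
  qed
  with ef show ?case by auto
qed

lemma tight_yx:
  assumes "tight M p q"
  shows "yx_tight M"
proof -
  have xy: "xy_primary M" and mg: "(p, q) \<in> min_gens M" using assms unfolding tight_def by auto
  obtain m :: nat and \<alpha> \<beta> :: "nat \<Rightarrow> nat" where eq: "min_gens M = {(\<alpha> i, \<beta> i) | i. i \<le> m}"
    and st: "\<forall>i j. i < j \<longrightarrow> j \<le> m \<longrightarrow> \<alpha> j < \<alpha> i \<and> \<beta> i < \<beta> j"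
    and am: "\<alpha> m = 0" and b0: "\<beta> 0 = 0"
    using enum[OF xy] by blast
  from mg eq obtain j where j: "j \<le> m" "\<alpha> j = p" "\<beta> j = q" by auto
  have hb: "\<forall>i \<le> j. \<beta> i = i"
  proof (rule counting[of m \<beta> j q])
    show "\<beta> i < \<beta> i'" if "i < i'" "i' \<le> m" for i i' using st that by blast
    show "{0..q} \<subseteq> \<beta> ` {0..m}"
    proof
      fix b assume "b \<in> {0..q}"
      then obtain c where "(c, b) \<in> min_gens M" using gen_y[OF assms] by auto
      with eq show "b \<in> \<beta> ` {0..m}" by auto
    qed
  qed (use j in auto)
  have ha: "\<forall>i \<le> m - j. (\<lambda>i. \<alpha> (m - i)) i = i"
  proof (rule counting[of m "\<lambda>i. \<alpha> (m - i)" "m - j" p])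
    show "\<alpha> (m - i) < \<alpha> (m - i')" if "i < i'" "i' \<le> m" for i i'
    proof -
      have "m - i' < m - i" "m - i \<le> m" using that by auto
      then show ?thesis using st by blast
    qed
    show "{0..p} \<subseteq> (\<lambda>i. \<alpha> (m - i)) ` {0..m}"
    proof
      fix a assume "a \<in> {0..p}"
      then obtain d where "(a, d) \<in> min_gens M" using gen_x[OF assms] by auto
      with eq obtain i where "i \<le> m" "\<alpha> i = a" by auto
      then have "a = \<alpha> (m - (m - i))" "m - i \<in> {0..m}" by auto
      then show "a \<in> (\<lambda>i. \<alpha> (m - i)) ` {0..m}" by blast
    qed
  qed (use j in auto)
  have ex: "\<exists>j \<le> m. (\<forall>i \<le> j. \<beta> i = i) \<and> (\<forall>i \<le> m - j. \<alpha> (m - i) = i)"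
  proof (rule exI[of _ j])
    have "\<forall>i \<le> m - j. \<alpha> (m - i) = i" using ha by simp
    then show "j \<le> m \<and> (\<forall>i \<le> j. \<beta> i = i) \<and> (\<forall>i \<le> m - j. \<alpha> (m - i) = i)"
      using j(1) hb by blast
  qed
  show ?thesis unfolding yx_tight_def
    apply (rule conjI[OF xy])
    apply (rule exI[of _ m], rule exI[of _ \<alpha>], rule exI[of _ \<beta>])
    using eq st am b0 ex by blast
qed

lemma yx_tight_ex:
  assumes "yx_tight M"
  shows "\<exists>p q. tight M p q"
proof -
  obtain m j :: nat and \<alpha> \<beta> :: "nat \<Rightarrow> nat" where xy: "xy_primary M" and eq: "min_gens M = {(\<alpha> i, \<beta> i) | i. i \<le> m}"
    and st: "\<forall>i j. i < j \<longrightarrow> j \<le> m \<longrightarrow> \<alpha> j < \<alpha> i \<and> \<beta> i < \<beta> j"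
    and j: "j \<le> m" and hb: "\<forall>i \<le> j. \<beta> i = i" and ha: "\<forall>i \<le> m - j. \<alpha> (m - i) = i"
    using assms unfolding yx_tight_def by blast
  have mi: "monomial_ideal M" using xy unfolding xy_primary_def by auto
  have ai: "\<alpha> i = m - i" if "j \<le> i" "i \<le> m" for i
    using ha[rule_format, of "m - i"] that by simp
  have aj: "\<alpha> j = m - j" using ai j by simp
  have bj: "\<beta> j = j" using hb by simp
  have gen: "(\<alpha> i, \<beta> i) \<in> M" if "i \<le> m" for i
    using eq that mg_sub by blast
  have mg: "(m - j, j) \<in> min_gens M" using eq j aj bj by force
  have sy: "SY M j" unfolding SY_def
  proof (intro allI impI)
    fix a b assume b: "b < j" and ab: "(a, b) \<in> M"
    from min_below[OF ab] obtain c d where cd: "(c, d) \<in> min_gens M" "c \<le> a" "d \<le> b" by blast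
    with eq obtain i where i: "i \<le> m" "c = \<alpha> i" "d = \<beta> i" by auto
    have "i < j"
    proof (rule ccontr)
      assume "\<not> i < j"
      then have "\<beta> j \<le> \<beta> i" using st i by (metis le_less linorder_not_less)
      with bj cd i b show False by simp
    qed
    then have "\<beta> (Suc i) = Suc i" "\<beta> i = i" "\<alpha> (Suc i) < \<alpha> i" using hb st j by auto
    moreover have "(\<alpha> (Suc i), \<beta> (Suc i)) \<in> M" using gen \<open>i < j\<close> j by simp
    ultimately have h: "\<beta> (Suc i) = Suc i" "\<beta> i = i" "\<alpha> (Suc i) < \<alpha> i" "(\<alpha> (Suc i), \<beta> (Suc i)) \<in> M" by auto
    have "\<alpha> (Suc i) \<le> a - 1" "Suc i \<le> Suc b" "a = Suc (a - 1)" using h cd i by auto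
    with h(4) mono_close[OF mi] show "\<exists>a'. a = Suc a' \<and> (a', Suc b) \<in> M"
      by (metis h(1))
  qed
  have sx: "SX M (m - j)" unfolding SX_def
  proof (intro allI impI)
    fix a b assume a: "a < m - j" and ab: "(a, b) \<in> M"
    from min_below[OF ab] obtain c d where cd: "(c, d) \<in> min_gens M" "c \<le> a" "d \<le> b" by blast
    with eq obtain i where i: "i \<le> m" "c = \<alpha> i" "d = \<beta> i" by auto
    have "j < i"
    proof (rule ccontr)
      assume "\<not> j < i"
      then have "\<alpha> j \<le> \<alpha> i" using st i j by (metis le_less linorder_not_less)
      with aj cd i a show False by simp
    qed
    then obtain i' where i': "i = Suc i'" "j \<le> i'" by (cases i) auto
    then have "\<alpha> i' = Suc (\<alpha> i)" using ai i by simp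
    moreover have "\<beta> i' < \<beta> i" using st i i' by simp
    moreover have "(\<alpha> i', \<beta> i') \<in> M" using gen i i' by simp
    ultimately have h: "\<alpha> i' = Suc (\<alpha> i)" "\<beta> i' < \<beta> i" "(\<alpha> i', \<beta> i') \<in> M" by auto
    have "\<alpha> i' \<le> Suc a" "\<beta> i' \<le> b - 1" "b = Suc (b - 1)" using h cd i by auto
    with h(3) mono_close[OF mi] show "\<exists>b'. b = Suc b' \<and> (Suc a, b') \<in> M"
      by metis
  qed
  show ?thesis unfolding tight_def using xy mg sy sx by blast
qed

lemma prod_mem: "(a1, b1) \<in> I \<Longrightarrow> (a2, b2) \<in> J \<Longrightarrow> a1 + a2 \<le> a \<Longrightarrow> b1 + b2 \<le> b \<Longrightarrow>
  (a, b) \<in> ideal_prod I J"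
  unfolding ideal_prod_def by blast

lemma prod_tight:
  assumes I: "tight I p1 q1" and J: "tight J p2 q2"
  shows "tight (ideal_prod I J) (p1 + p2) (q1 + q2)"
proof -
  let ?P = "ideal_prod I J"
  have xI: "xy_primary I" and xJ: "xy_primary J" using I J unfolding tight_def by auto
  have syI: "SY I q1" and syJ: "SY J q2" and sxI: "SX I p1" and sxJ: "SX J p2"
    using I J unfolding tight_def by auto
  have mgI: "(p1, q1) \<in> I" and mgJ: "(p2, q2) \<in> J"
    using I J unfolding tight_def by (auto dest: mg_sub)
  have mi: "monomial_ideal ?P" unfolding monomial_ideal_def ideal_prod_def
    by clarsimp (meson order_trans)
  have n00: "(0, 0) \<notin> ?P"
  proof
    assume "(0, 0) \<in> ?P"
    then obtain a1 b1 a2 b2 where "(a1, b1) \<in> I" "a1 + a2 \<le> 0" "b1 + b2 \<le> 0"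
      unfolding ideal_prod_def by blast
    with xI show False unfolding xy_primary_def by simp
  qed
  obtain A1 B1 A2 B2 where "(A1, 0) \<in> I" "(0, B1) \<in> I" "(A2, 0) \<in> J" "(0, B2) \<in> J"
    using xI xJ unfolding xy_primary_def by blast
  then have "(A1 + A2, 0) \<in> ?P" "(0, B1 + B2) \<in> ?P" using prod_mem by auto
  with mi n00 have xP: "xy_primary ?P" unfolding xy_primary_def by blast
  have lb: "p1 + p2 + (q1 + q2) \<le> a + b" if "(a, b) \<in> ?P" for a b
  proof -
    from that obtain a1 b1 a2 b2 where "(a1, b1) \<in> I" "(a2, b2) \<in> J" "a1 + a2 \<le> a" "b1 + b2 \<le> b"
      unfolding ideal_prod_def by blast
    with sum_bound[OF I] sum_bound[OF J] show ?thesis by fastforce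
  qed
  have mgP: "(p1 + p2, q1 + q2) \<in> min_gens ?P"
    unfolding mg_iff using prod_mem[OF mgI mgJ] lb by fastforce
  have syP: "SY ?P (q1 + q2)" unfolding SY_def
  proof (intro allI impI)
    fix a b assume b: "b < q1 + q2" and ab: "(a, b) \<in> ?P"
    from ab obtain a1 b1 a2 b2 where w: "(a1, b1) \<in> I" "(a2, b2) \<in> J" "a1 + a2 \<le> a" "b1 + b2 \<le> b"
      unfolding ideal_prod_def by blast
    show "\<exists>a'. a = Suc a' \<and> (a', Suc b) \<in> ?P"
    proof (cases "b1 < q1")
      case True
      with syI w obtain a' where "a1 = Suc a'" "(a', Suc b1) \<in> I" unfolding SY_def by blast
      with w prod_mem[of a' "Suc b1" I a2 b2 J "a - 1" "Suc b"] show ?thesis by (intro exI[of _ "a - 1"]) auto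
    next
      case False
      then have "b2 < q2" using b w by linarith
      with syJ w obtain a' where "a2 = Suc a'" "(a', Suc b2) \<in> J" unfolding SY_def by blast
      with w prod_mem[of a1 b1 I a' "Suc b2" J "a - 1" "Suc b"] show ?thesis by (intro exI[of _ "a - 1"]) auto
    qed
  qed
  have sxP: "SX ?P (p1 + p2)" unfolding SX_def
  proof (intro allI impI)
    fix a b assume a: "a < p1 + p2" and ab: "(a, b) \<in> ?P"
    from ab obtain a1 b1 a2 b2 where w: "(a1, b1) \<in> I" "(a2, b2) \<in> J" "a1 + a2 \<le> a" "b1 + b2 \<le> b"
      unfolding ideal_prod_def by blast
    show "\<exists>b'. b = Suc b' \<and> (Suc a, b') \<in> ?P"
    proof (cases "a1 < p1")
      case True
      with sxI w obtain b' where "b1 = Suc b'" "(Suc a1, b') \<in> I" unfolding SX_def by blast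
      with w prod_mem[of "Suc a1" b' I a2 b2 J "Suc a" "b - 1"] show ?thesis by (intro exI[of _ "b - 1"]) auto
    next
      case False
      then have "a2 < p2" using a w by linarith
      with sxJ w obtain b' where "b2 = Suc b'" "(Suc a2, b') \<in> J" unfolding SX_def by blast
      with w prod_mem[of a1 b1 I "Suc a2" b' J "Suc a" "b - 1"] show ?thesis by (intro exI[of _ "b - 1"]) auto
    qed
  qed
  show ?thesis unfolding tight_def using xP mgP syP sxP by blast
qed

theorem theorem2p12:
  assumes "yx_tight I" and "yx_tight J"
  shows "yx_tight (ideal_prod I J)"
proof -
  from yx_tight_ex[OF assms(1)] obtain p1 q1 where "tight I p1 q1" by blast
  moreover from yx_tight_ex[OF assms(2)] obtain p2 q2 where "tight J p2 q2" by blast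
  ultimately show ?thesis using prod_tight tight_yx by blast
qed

end
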